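(* Let $F:(M_1(c_1,c_2,c_3),g_1)\to(M_2,g_2)$ be a Riemannian submersion from a generalized Sasakian space form with $\dim M_1=n=2k+1$ onto a Riemannian manifold with $\dim M_2=m$ and fibre dimension $r=\dim\mathcal V_p>2$. Let $p\in M_1$, $\Pi\subset\mathcal V_p$ a $2$-plane, $\{V_1,\dots,V_r\}$ an orthonormal basis of $\mathcal V_p$ with $\Pi=\mathrm{span}\{V_1,V_2\}$, and $\{h_1,\dots,h_s\}$ an orthonormal basis of $\mathcal H_p$. Then: (i) if $\xi_p\in\mathcal V_p$, $$\tau^{\ker F_*}_{\mathcal V}(p)-K^{\ker F_*}_{\mathcal V}(\Pi)\ge-\frac{r^2(r-2)}{2(r-1)}\|H\|^2+\frac{c_1}2(r^2-r-2)-c_3\big((r-1)-\Theta(\Pi)\big)+\frac32c_2\big(\|Q\|^2-2g_1(V_1,QV_2)^2\big);$$ (ii) if $\xi_p\in\mathcal H_p$, $$\tau^{\ker F_*}_{\mathcal V}(p)-K^{\ker F_*}_{\mathcal V}(\Pi)\ge-\frac{r^2(r-2)}{2(r-1)}\|H\|^2+\frac{c_1}2(r^2-r-2)+\frac32c_2\big(\|Q\|^2-2g_1(V_1,QV_2)^2\big),$$ where $\Theta(\Pi)=\eta(V_1)^2+\eta(V_2)^2$. In each case equality holds if and only if Condition (E) holds at $p$ for $\Pi$.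
   Context: An almost contact metric manifold $(M_1,\phi,\xi,\eta,g_1)$ is an odd-dimensional Riemannian manifold with a $(1,1)$-tensor $\phi$, vector field $\xi$, $1$-form $\eta$ such that $\eta(\xi)=1$, $\phi^2Z=-Z+\eta(Z)\xi$, $g_1(\phi Z_1,\phi Z_2)=g_1(Z_1,Z_2)-\eta(Z_1)\eta(Z_2)$. It is a generalized Sasakian space form $M_1(c_1,c_2,c_3)$ if there are smooth functions $c_1,c_2,c_3$ with $R(Z_1,Z_2)Z_3=c_1\{g_1(Z_2,Z_3)Z_1-g_1(Z_1,Z_3)Z_2\}+c_2\{g_1(Z_1,\phi Z_3)\phi Z_2-g_1(Z_2,\phi Z_3)\phi Z_1+2g_1(Z_1,\phi Z_2)\phi Z_3\}+c_3\{\eta(Z_1)\eta(Z_3)Z_2-\eta(Z_2)\eta(Z_3)Z_1+g_1(Z_1,Z_3)\eta(Z_2)\xi-g_1(Z_2,Z_3)\eta(Z_1)\xi\}$. For a tangent vector $Z$ write $\phi Z=PZ+QZ$ with $PZ\in\mathcal H$, $QZ\in\mathcal V$, and $\|Q\|^2=\sum_{i,j=1}^r g_1(QV_i,V_j)^2$. Let $(M_1,g_1)$, $(M_2,g_2)$ be Riemannian manifolds, $\dim M_1=n$, $\dim M_2=m$, and $F:M_1\to M_2$ a Riemannian submersion (a surjective smooth map whose differential $F_{*p}$ is surjective at every $p$ and preserves the length of horizontal vectors). Write $\mathcal V=\ker F_*$ (vertical distribution), $\mathcal H=(\ker F_* )^\perp$ (horizontal distribution), $r=\dim\mathcal V_p=n-m$,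 $s=\dim\mathcal H_p=m$; $v,h$ denote the orthogonal projections onto $\mathcal V,\mathcal H$, and $\nabla$ the Levi-Civita connection of $g_1$. O'Neill's tensor: $\mathcal T_EF=h\nabla_{vE}vF+v\nabla_{vE}hF$. Curvature convention: $R^{M_1}(X,Y,Z,W)=g_1(R^{M_1}(X,Y)Z,W)$, normalized so that $R^{M_1}(X,Y,Y,X)$ is the sectional curvature of the plane spanned by orthonormal $X,Y$. The curvature $R^{\ker F_*}$ of the fibres is related to $R^{M_1}$ (as used in the paper) by: for vertical $F_1,\dots,F_4$, $R^{M_1}(F_1,F_2,F_3,F_4)=R^{\ker F_*}(F_1,F_2,F_3,F_4)+g_1(\mathcal T_{F_1}F_4,\mathcal T_{F_2}F_3)-g_1(\mathcal T_{F_2}F_4,\mathcal T_{F_1}F_3)$. With the chosen orthonormal bases at $p$: $(\mathcal T^{\mathcal H})^\ell_{ij}=g_1(\mathcal T_{V_i}V_j,h_\ell)$; the mean curvature vector of the fibres is $H=\frac1r\sum_{i=1}^r\mathcal T_{V_i}V_i$; $\tau^{\ker F_*}_{\mathcal V}(p)=\frac12\sum_{i,j=1}^rR^{\ker F_*}(V_i,V_j,V_j,V_i)$, $K^{\ker F_*}_{\mathcal V}(\Pi)=R^{\ker F_*}(V_1,V_2,V_2,V_1)$ for $\Pi=\mathrm{span}\{V_1,V_2\}$. Condition (E) at $p$ for $\Pi$: there exist orthonormal bases $\{V_1,\dots,V_r\}$ of $\mathcal V_p$ with $\Pi=\mathrm{span}\{V_1,V_2\}$ and $\{h_1,\dots,h_s\}$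 of $\mathcal H_p$ with $h_1=H(p)/\|H(p)\|$ if $H(p)\neq0$ ($h_1$ arbitrary if $H(p)=0$), such that: $(\mathcal T^{\mathcal H})^\ell_{1j}=(\mathcal T^{\mathcal H})^\ell_{2j}=0$ for $j>2$, $\ell=1,\dots,s$; $(\mathcal T^{\mathcal H})^1_{ij}=0$ for $i\ne j$, $i,j>2$; $(\mathcal T^{\mathcal H})^\ell_{ij}=0$ for $i,j>2$, $\ell=2,\dots,s$; $(\mathcal T^{\mathcal H})^\ell_{11}+(\mathcal T^{\mathcal H})^\ell_{22}=0$ for $\ell=2,\dots,s$; and $(\mathcal T^{\mathcal H})^1_{11}+(\mathcal T^{\mathcal H})^1_{22}=(\mathcal T^{\mathcal H})^1_{33}=\cdots=(\mathcal T^{\mathcal H})^1_{rr}$. *)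

theory Defs
  imports "HOL-Analysis.Analysis"
begin

text \<open>Pointwise (tangent-space at p) model. The tangent space T_pM_1 is a finite
  dimensional real inner product space 'a, with g_1 at p given by inner.\<close>

definition orth_comp :: "'a::real_inner set \<Rightarrow> 'a set" where
  "orth_comp V = {x. \<forall>v\<in>V. inner x v = 0}"

definition vproj :: "'a::real_inner set \<Rightarrow> 'a \<Rightarrow> 'a" where
  "vproj V z = (THE v. v \<in> V \<and> z - v \<in> orth_comp V)"

definition onb :: "'a::real_inner set \<Rightarrow> nat \<Rightarrow> (nat \<Rightarrow> 'a) \<Rightarrow> bool" where
  "onb W k e \<longleftrightarrow> (\<forall>i\<in>{1..k}. e i \<in> W) \<and>
     (\<forall>i\<in>{1..k}. \<forall>j\<in>{1..k}. inner (e i) (e j) = (if i = j then 1 else 0)) \<and>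
     span (e ` {1..k}) = W"

definition almost_contact_metric ::
  "('a::real_inner \<Rightarrow> 'a) \<Rightarrow> 'a \<Rightarrow> ('a \<Rightarrow> real) \<Rightarrow> bool" where
  "almost_contact_metric \<phi> \<xi> \<eta> \<longleftrightarrow> linear \<phi> \<and> linear \<eta> \<and> \<eta> \<xi> = 1 \<and>
     (\<forall>Z. \<phi> (\<phi> Z) = - Z + \<eta> Z *\<^sub>R \<xi>) \<and>
     (\<forall>Z1 Z2. inner (\<phi> Z1) (\<phi> Z2) = inner Z1 Z2 - \<eta> Z1 * \<eta> Z2)"

definition gss_curv ::
  "real \<Rightarrow> real \<Rightarrow> real \<Rightarrow> ('a::real_inner \<Rightarrow> 'a) \<Rightarrow> 'a \<Rightarrow> ('a \<Rightarrow> real) \<Rightarrow> 'a \<Rightarrow> 'a \<Rightarrow> 'a \<Rightarrow> 'a" where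
  "gss_curv c1 c2 c3 \<phi> \<xi> \<eta> Z1 Z2 Z3 =
     c1 *\<^sub>R (inner Z2 Z3 *\<^sub>R Z1 - inner Z1 Z3 *\<^sub>R Z2)
   + c2 *\<^sub>R (inner Z1 (\<phi> Z3) *\<^sub>R \<phi> Z2 - inner Z2 (\<phi> Z3) *\<^sub>R \<phi> Z1
             + (2 * inner Z1 (\<phi> Z2)) *\<^sub>R \<phi> Z3)
   + c3 *\<^sub>R ((\<eta> Z1 * \<eta> Z3) *\<^sub>R Z2 - (\<eta> Z2 * \<eta> Z3) *\<^sub>R Z1
             + (inner Z1 Z3 * \<eta> Z2) *\<^sub>R \<xi> - (inner Z2 Z3 * \<eta> Z1) *\<^sub>R \<xi>)"

definition tauV :: "('a \<Rightarrow> 'a \<Rightarrow> 'a \<Rightarrow> 'a \<Rightarrow> real) \<Rightarrow> nat \<Rightarrow> (nat \<Rightarrow> 'a) \<Rightarrow> real" where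
  "tauV Rk r e = (1/2) * (\<Sum>i\<in>{1..r}. \<Sum>j\<in>{1..r}. Rk (e i) (e j) (e j) (e i))"

definition meanH :: "('a::real_vector \<Rightarrow> 'a \<Rightarrow> 'a) \<Rightarrow> nat \<Rightarrow> (nat \<Rightarrow> 'a) \<Rightarrow> 'a" where
  "meanH T r e = (1 / real r) *\<^sub>R (\<Sum>i\<in>{1..r}. T (e i) (e i))"

definition Qnorm2 :: "'a::real_inner set \<Rightarrow> ('a \<Rightarrow> 'a) \<Rightarrow> nat \<Rightarrow> (nat \<Rightarrow> 'a) \<Rightarrow> real" where
  "Qnorm2 V \<phi> r e = (\<Sum>i\<in>{1..r}. \<Sum>j\<in>{1..r}. (inner (vproj V (\<phi> (e i))) (e j))\<^sup>2)"

definition condE ::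
  "'a::real_inner set \<Rightarrow> ('a \<Rightarrow> 'a \<Rightarrow> 'a) \<Rightarrow> 'a \<Rightarrow> nat \<Rightarrow> nat \<Rightarrow> (nat \<Rightarrow> 'a) \<Rightarrow> bool" where
  "condE V T Hm r s e \<longleftrightarrow> (\<exists>W h. onb V r W \<and> span {W 1, W 2} = span {e 1, e 2} \<and>
     onb (orth_comp V) s h \<and> (Hm \<noteq> 0 \<longrightarrow> h 1 = (1 / norm Hm) *\<^sub>R Hm) \<and>
     (let t = (\<lambda>l i j. inner (T (W i) (W j)) (h l)) in
        (\<forall>l\<in>{1..s}. \<forall>j\<in>{3..r}. t l 1 j = 0 \<and> t l 2 j = 0) \<and>
        (1 \<le> s \<longrightarrow> (\<forall>i\<in>{3..r}. \<forall>j\<in>{3..r}. i \<noteq> j \<longrightarrow> t 1 i j = 0)) \<and>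
        (\<forall>l\<in>{2..s}. \<forall>i\<in>{3..r}. \<forall>j\<in>{3..r}. t l i j = 0) \<and>
        (\<forall>l\<in>{2..s}. t l 1 1 + t l 2 2 = 0) \<and>
        (1 \<le> s \<longrightarrow> (\<forall>i\<in>{3..r}. t 1 1 1 + t 1 2 2 = t 1 i i))))"

end

theory Submission
  imports Defs
begin

lemma acm_facts:
  assumes acm: "almost_contact_metric \<phi> \<xi> \<eta>"
  shows "\<phi> \<xi> = 0" "\<And>x. \<eta> x = inner x \<xi>" "\<And>x y. inner (\<phi> x) y = - inner x (\<phi> y)"
    "\<And>x. inner x (\<phi> x) = 0" "inner \<xi> \<xi> = 1"
proof -
  have lp: "linear \<phi>" and le: "linear \<eta>" and e1: "\<eta> \<xi> = 1"
    and sq: "\<And>Z. \<phi> (\<phi> Z) = - Z + \<eta> Z *\<^sub>R \<xi>"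
    and met: "\<And>Z1 Z2. inner (\<phi> Z1) (\<phi> Z2) = inner Z1 Z2 - \<eta> Z1 * \<eta> Z2"
    using acm by (auto simp: almost_contact_metric_def)
  have xi0: "\<xi> \<noteq> 0" using e1 linear_0[OF le] by auto
  have cube: "\<eta> Z *\<^sub>R \<phi> \<xi> = \<eta> (\<phi> Z) *\<^sub>R \<xi>" for Z
  proof -
    have "\<phi> (\<phi> (\<phi> Z)) = - \<phi> Z + \<eta> Z *\<^sub>R \<phi> \<xi>"
      by (simp add: sq linear_diff[OF lp] linear_add[OF lp] linear_neg[OF lp] linear_scale[OF lp])
    moreover have "\<phi> (\<phi> (\<phi> Z)) = - \<phi> Z + \<eta> (\<phi> Z) *\<^sub>R \<xi>" by (rule sq)
    ultimately show ?thesis by simp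
  qed
  define a where "a = \<eta> (\<phi> \<xi>)"
  have pa: "\<phi> \<xi> = a *\<^sub>R \<xi>" using cube[of \<xi>] e1 a_def by simp
  have "\<phi> (\<phi> \<xi>) = 0" using sq[of \<xi>] e1 by simp
  hence "a *\<^sub>R (a *\<^sub>R \<xi>) = 0" using pa linear_scale[OF lp] by metis
  hence "a = 0" using xi0 by simp
  thus px: "\<phi> \<xi> = 0" using pa by simp
  show eta: "\<eta> x = inner x \<xi>" for x using met[of x \<xi>] px e1 by simp
  have etaphi: "\<eta> (\<phi> Y) = 0" for Y using cube[of Y] px xi0 by simp
  show sk: "inner (\<phi> x) y = - inner x (\<phi> y)" for x y
  proof -
    have "inner (\<phi> x) (\<phi> (\<phi> y)) = inner x (\<phi> y)" using met[of x "\<phi> y"] etaphi by simp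
    moreover have "inner (\<phi> x) (\<phi> (\<phi> y)) = - inner (\<phi> x) y"
      using sq[of y] etaphi[of x] eta[of "\<phi> x"] by (simp add: inner_add_right inner_diff_right)
    ultimately show ?thesis by simp
  qed
  show "inner x (\<phi> x) = 0" for x using sk[of x x] by (simp add: inner_commute)
  show "inner \<xi> \<xi> = 1" using eta[of \<xi>] e1 by simp
qed

lemma onb_in: "onb W k e \<Longrightarrow> i \<in> {1..k} \<Longrightarrow> e i \<in> W"
  by (auto simp: onb_def)

lemma onb_inner: "onb W k e \<Longrightarrow> i \<in> {1..k} \<Longrightarrow> j \<in> {1..k} \<Longrightarrow> inner (e i) (e j) = (if i = j then 1 else 0)"
  by (auto simp: onb_def)

lemma onb_orth_zero:
  assumes o: "onb W k e" and x: "x \<in> W" and z: "\<And>i. i \<in> {1..k} \<Longrightarrow> inner x (e i) = 0"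
  shows "x = 0"
proof -
  have "span (e ` {1..k}) \<subseteq> {y. inner x y = 0}"
    by (rule span_minimal) (auto simp: z subspace_def inner_add_right)
  moreover have "x \<in> span (e ` {1..k})" using o x by (auto simp: onb_def)
  ultimately show ?thesis by auto
qed

lemma onb_expand:
  assumes o: "onb W k e" and x: "x \<in> W"
  shows "x = (\<Sum>i\<in>{1..k}. inner x (e i) *\<^sub>R e i)"
proof -
  let ?y = "x - (\<Sum>i\<in>{1..k}. inner x (e i) *\<^sub>R e i)"
  have sW: "subspace W" using o unfolding onb_def by (metis subspace_span)
  have "?y \<in> W"
    using o x sW by (auto intro!: subspace_diff subspace_sum subspace_scale simp: onb_def)
  moreover have "inner ?y (e j) = 0" if j: "j \<in> {1..k}" for j
  proof -
    have "inner (\<Sum>i\<in>{1..k}. inner x (e i) *\<^sub>R e i) (e j) = (\<Sum>i\<in>{1..k}. inner x (e i) * (if i = j then 1 else 0))"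
      using onb_inner[OF o _ j] by (simp add: inner_sum_left)
    also have "\<dots> = inner x (e j)" using j by (simp add: if_distrib cong: if_cong)
    finally show ?thesis by (simp add: inner_diff_left)
  qed
  ultimately have "?y = 0" by (rule onb_orth_zero[OF o])
  thus ?thesis by simp
qed

lemma onb_parseval:
  assumes o: "onb W k e" and x: "x \<in> W"
  shows "inner x y = (\<Sum>i\<in>{1..k}. inner x (e i) * inner (e i) y)"
proof -
  have "inner x y = inner (\<Sum>i\<in>{1..k}. inner x (e i) *\<^sub>R e i) y"
    using onb_expand[OF o x] by simp
  thus ?thesis by (simp add: inner_sum_left)
qed

lemma subspace_orth_comp: "subspace (orth_comp V)"
  by (auto simp: subspace_def orth_comp_def inner_add_left)

lemma vproj_inner:
  assumes o: "onb V r e" and y: "y \<in> V"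
  shows "inner (vproj V z) y = inner z y"
proof -
  have sV: "subspace V" using o unfolding onb_def by (metis subspace_span)
  define v where "v = (\<Sum>i\<in>{1..r}. inner z (e i) *\<^sub>R e i)"
  have vV: "v \<in> V" unfolding v_def
    using o sV by (auto intro!: subspace_sum subspace_scale simp: onb_def)
  have vo: "z - v \<in> orth_comp V"
  proof -
    have "inner (z - v) w = 0" if w: "w \<in> V" for w
    proof -
      have "inner v w = (\<Sum>i\<in>{1..r}. inner z (e i) * inner (e i) w)"
        by (simp add: v_def inner_sum_left)
      also have "\<dots> = (\<Sum>i\<in>{1..r}. inner w (e i) * inner (e i) z)"
        by (intro sum.cong refl) (simp add: inner_commute[of z "e _"] inner_commute[of "e _" w] mult_ac)
      also have "\<dots> = inner w z" by (rule onb_parseval[OF o w, symmetric])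
      finally show ?thesis by (simp add: inner_diff_left inner_commute[of w z])
    qed
    thus ?thesis by (simp add: orth_comp_def)
  qed
  have uniq: "u = v" if "u \<in> V \<and> z - u \<in> orth_comp V" for u
  proof -
    have "v - u \<in> V" using that vV sV by (simp add: subspace_diff)
    moreover have "inner (v - u) w = 0" if "w \<in> V" for w
    proof -
      have "inner (z - u) w = 0" "inner (z - v) w = 0" using \<open>u \<in> V \<and> z - u \<in> orth_comp V\<close> vo that
        by (auto simp: orth_comp_def)
      thus ?thesis by (simp add: inner_diff_left)
    qed
    ultimately have "inner (v - u) (v - u) = 0" by blast
    thus ?thesis by simp
  qed
  have "vproj V z = v" unfolding vproj_def
  proof (rule the_equality)
    show "v \<in> V \<and> z - v \<in> orth_comp V" using vV vo by blast
  next
    fix u assume "u \<in> V \<and> z - u \<in> orth_comp V"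
    then show "u = v" by (rule uniq)
  qed
  moreover have "inner (z - v) y = 0" using vo y by (simp add: orth_comp_def)
  ultimately show ?thesis by (simp add: inner_diff_left)
qed

lemma gss_formula:
  assumes sk: "inner Y (\<phi> Y) = 0" and eta: "\<And>x. \<eta> x = inner x \<xi>"
  shows "inner (gss_curv c1 c2 c3 \<phi> \<xi> \<eta> X Y Y) X = c1 * (inner Y Y * inner X X - (inner X Y)\<^sup>2)
     + 3 * c2 * (inner X (\<phi> Y))\<^sup>2
     - c3 * ((\<eta> X)\<^sup>2 * inner Y Y + (\<eta> Y)\<^sup>2 * inner X X - 2 * inner X Y * \<eta> X * \<eta> Y)"
proof -
  have a: "inner (\<phi> Y) X = inner X (\<phi> Y)" "inner Y X = inner X Y" "inner \<xi> X = \<eta> X"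
    by (simp_all add: inner_commute eta)
  show ?thesis
    unfolding gss_curv_def
    by (simp add: inner_add_left inner_diff_left a sk power2_eq_square algebra_simps)
qed

definition sigB :: "(nat \<Rightarrow> nat \<Rightarrow> 'b::real_inner) \<Rightarrow> nat \<Rightarrow> 'b" where
  "sigB B r = (\<Sum>i\<in>{1..r}. B i i)"
definition BBs :: "(nat \<Rightarrow> nat \<Rightarrow> 'b::real_inner) \<Rightarrow> nat \<Rightarrow> real" where
  "BBs B r = (\<Sum>i\<in>{1..r}. \<Sum>j\<in>{1..r}. inner (B i j) (B i j))"
definition DB :: "(nat \<Rightarrow> nat \<Rightarrow> 'b::real_inner) \<Rightarrow> nat \<Rightarrow> real" where
  "DB B r = 1/2 * BBs B r - 1/2 * inner (sigB B r) (sigB B r) + (inner (B 1 1) (B 2 2) - inner (B 1 2) (B 1 2))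
     + (real r - 2) / (2 * (real r - 1)) * inner (sigB B r) (sigB B r)"
definition vcB :: "(nat \<Rightarrow> nat \<Rightarrow> 'b::real_inner) \<Rightarrow> nat \<Rightarrow> bool" where
  "vcB B r \<longleftrightarrow> (\<forall>j\<in>{3..r}. B 1 j = 0 \<and> B 2 j = 0) \<and> (\<forall>i\<in>{3..r}. \<forall>j\<in>{3..r}. i \<noteq> j \<longrightarrow> B i j = 0)
     \<and> (\<forall>i\<in>{3..r}. B 1 1 + B 2 2 = B i i)"

lemma split12: "(2::nat) \<le> r \<Longrightarrow> (\<Sum>i\<in>{1..r}. f i) = f 1 + f 2 + (\<Sum>i\<in>{3..r}. f i)"
proof -
  assume "2 \<le> r"
  hence "{1..r} = insert 1 (insert 2 {3..r})" by auto
  thus ?thesis by (simp add: add.assoc)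
qed

lemma core:
  fixes B :: "nat \<Rightarrow> nat \<Rightarrow> 'b::real_inner"
  assumes r: "r > 2" and sym: "\<And>i j. i \<in> {1..r} \<Longrightarrow> j \<in> {1..r} \<Longrightarrow> B i j = B j i"
  shows "DB B r \<ge> 0 \<and> (DB B r = 0 \<longleftrightarrow> vcB B r)"
proof -
  define R where "R = {3..r}"
  define c where "c = B 1 1 + B 2 2"
  define sR where "sR = (\<Sum>i\<in>R. B i i)"
  define \<sigma> where "\<sigma> = sigB B r"
  define N where "N = real r - 1"
  have N: "N > 0" using r by (simp add: N_def)
  define m where "m = (1 / N) *\<^sub>R \<sigma>"
  have sig: "\<sigma> = c + sR" using split12[of r "\<lambda>i. B i i"] r
    by (simp add: \<sigma>_def sigB_def c_def sR_def R_def)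
  have cardR: "card R = r - 2" by (simp add: R_def)
  have symR: "B i 1 = B 1 i" "B i 2 = B 2 i" if "i \<in> R" for i
    using sym that r by (auto simp: R_def)
  have s21: "B 2 1 = B 1 2" using sym r by auto
  define E where "E = (\<Sum>j\<in>R. inner (B 1 j) (B 1 j) + inner (B 2 j) (B 2 j))
      + 1/2 * (\<Sum>i\<in>R. \<Sum>j\<in>R-{i}. inner (B i j) (B i j))"
  define SA where "SA = (\<Sum>i\<in>R. inner (B i i) (B i i))"
  have inner_split: "(\<Sum>j\<in>R. inner (B i j) (B i j)) = inner (B i i) (B i i) + (\<Sum>j\<in>R-{i}. inner (B i j) (B i j))"
    if "i \<in> R" for i
    using that by (simp add: R_def sum.remove)
  have BB: "BBs B r = inner (B 1 1) (B 1 1) + inner (B 2 2) (B 2 2) + 2 * inner (B 1 2) (B 1 2) + 2 * E + SA"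
  proof -
    have "BBs B r = (\<Sum>i\<in>{1..r}. inner (B i 1) (B i 1) + inner (B i 2) (B i 2) + (\<Sum>j\<in>R. inner (B i j) (B i j)))"
      unfolding BBs_def R_def by (intro sum.cong refl split12[OF less_imp_le[OF r]])
    also have "\<dots> = (inner (B 1 1) (B 1 1) + inner (B 1 2) (B 1 2) + (\<Sum>j\<in>R. inner (B 1 j) (B 1 j)))
        + (inner (B 2 1) (B 2 1) + inner (B 2 2) (B 2 2) + (\<Sum>j\<in>R. inner (B 2 j) (B 2 j)))
        + (\<Sum>i\<in>R. inner (B i 1) (B i 1) + inner (B i 2) (B i 2) + (\<Sum>j\<in>R. inner (B i j) (B i j)))"
      unfolding R_def by (rule split12[OF less_imp_le[OF r]])
    also have "(\<Sum>i\<in>R. inner (B i 1) (B i 1) + inner (B i 2) (B i 2) + (\<Sum>j\<in>R. inner (B i j) (B i j)))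
       = (\<Sum>i\<in>R. inner (B 1 i) (B 1 i) + inner (B 2 i) (B 2 i)) + SA + (\<Sum>i\<in>R. \<Sum>j\<in>R-{i}. inner (B i j) (B i j))"
    proof -
      have "(\<Sum>i\<in>R. inner (B i 1) (B i 1) + inner (B i 2) (B i 2) + (\<Sum>j\<in>R. inner (B i j) (B i j)))
        = (\<Sum>i\<in>R. (inner (B 1 i) (B 1 i) + inner (B 2 i) (B 2 i)) + inner (B i i) (B i i) + (\<Sum>j\<in>R-{i}. inner (B i j) (B i j)))"
      proof (rule sum.cong[OF refl])
        fix i assume i: "i \<in> R"
        show "inner (B i 1) (B i 1) + inner (B i 2) (B i 2) + (\<Sum>j\<in>R. inner (B i j) (B i j))
          = (inner (B 1 i) (B 1 i) + inner (B 2 i) (B 2 i)) + inner (B i i) (B i i) + (\<Sum>j\<in>R-{i}. inner (B i j) (B i j))"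
          using symR[OF i] inner_split[OF i] by simp
      qed
      thus ?thesis by (simp only: sum.distrib SA_def)
    qed
    finally show ?thesis using s21 by (simp add: E_def sum.distrib)
  qed
  have Sdev: "(\<Sum>i\<in>R. inner (B i i - m) (B i i - m)) = SA - 2 * inner m sR + real (r - 2) * inner m m"
  proof -
    have t: "inner (x - m) (x - m) = inner x x - 2 * inner m x + inner m m" for x
      by (simp add: inner_diff_left inner_diff_right inner_commute[of x m])
    have "(\<Sum>i\<in>R. inner (B i i - m) (B i i - m)) = (\<Sum>i\<in>R. inner (B i i) (B i i)) - 2 * (\<Sum>i\<in>R. inner m (B i i)) + (\<Sum>i\<in>R. inner m m)"
      unfolding t by (simp add: sum.distrib sum_subtractf sum_distrib_left)
    thus ?thesis by (simp add: SA_def sR_def inner_sum_right cardR)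
  qed
  have cdev: "inner (c - m) (c - m) = inner (B 1 1) (B 1 1) + inner (B 2 2) (B 2 2) + 2 * inner (B 1 1) (B 2 2)
      - 2 * inner m c + inner m m"
  proof -
    have t2: "inner (x + y - m) (x + y - m) = inner x x + inner y y + 2 * inner x y - 2 * inner m (x + y) + inner m m" for x y
      by (simp add: inner_diff_left inner_diff_right inner_add_left inner_add_right inner_commute[of x m]
        inner_commute[of y m] inner_commute[of y x])
    show ?thesis unfolding c_def by (rule t2)
  qed
  have mm: "inner m m = inner \<sigma> \<sigma> / N^2" "inner m \<sigma> = inner \<sigma> \<sigma> / N"
    by (simp_all add: m_def power2_eq_square)
  have rN: "real (r - 2) = N - 1" using r by (simp add: N_def of_nat_diff)
  have rr: "real r = N + 1" by (simp add: N_def)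
  have key: "DB B r = E + 1/2 * (inner (c - m) (c - m) + (\<Sum>i\<in>R. inner (B i i - m) (B i i - m)))"
  proof -
    have "inner m sR + inner m c = inner m \<sigma>" by (simp add: sig inner_add_right)
    hence X: "inner m sR = inner \<sigma> \<sigma> / N - inner m c" using mm by simp
    show ?thesis
      unfolding DB_def BB Sdev cdev X rN mm(1) \<sigma>_def[symmetric] rr
      using N by (simp add: field_simps power2_eq_square)
  qed
  have E0: "E \<ge> 0" unfolding E_def
    by (intro add_nonneg_nonneg mult_nonneg_nonneg sum_nonneg) auto
  have Sd0: "(\<Sum>i\<in>R. inner (B i i - m) (B i i - m)) \<ge> 0" by (intro sum_nonneg) auto
  show ?thesis
  proof (intro conjI)
    show "DB B r \<ge> 0" unfolding key using E0 Sd0 by simp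
    show "DB B r = 0 \<longleftrightarrow> vcB B r"
    proof
      assume "DB B r = 0"
      hence k0: "E + 1/2 * (inner (c - m) (c - m) + (\<Sum>i\<in>R. inner (B i i - m) (B i i - m))) = 0"
        unfolding key .
      have cc0: "inner (c - m) (c - m) \<ge> 0" by simp
      have gen: "\<And>(E::real) (a::real) (b::real). E + 1/2*(a+b) = 0 \<Longrightarrow> 0 \<le> E \<Longrightarrow> 0 \<le> b \<Longrightarrow> 0 \<le> a \<Longrightarrow> E = 0 \<and> a = 0 \<and> b = 0"
        by (auto simp: field_simps)
      have zz: "E = 0 \<and> inner (c - m) (c - m) = 0 \<and> (\<Sum>i\<in>R. inner (B i i - m) (B i i - m)) = 0"
        by (rule gen[OF k0 E0 Sd0 cc0])
      have z1: "E = 0" using zz by blast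
      have z2: "inner (c - m) (c - m) = 0" using zz by blast
      have z3: "(\<Sum>i\<in>R. inner (B i i - m) (B i i - m)) = 0" using zz by blast
      note z = z1 z2 z3
      have f: "finite R" by (simp add: R_def)
      have E1: "(\<Sum>j\<in>R. inner (B 1 j) (B 1 j) + inner (B 2 j) (B 2 j)) = 0"
        and E2: "(\<Sum>i\<in>R. \<Sum>j\<in>R-{i}. inner (B i j) (B i j)) = 0"
      proof -
        have a: "(\<Sum>j\<in>R. inner (B 1 j) (B 1 j) + inner (B 2 j) (B 2 j)) \<ge> 0"
          by (intro sum_nonneg) auto
        have b: "(\<Sum>i\<in>R. \<Sum>j\<in>R-{i}. inner (B i j) (B i j)) \<ge> 0"
          by (intro sum_nonneg) auto
        show "(\<Sum>j\<in>R. inner (B 1 j) (B 1 j) + inner (B 2 j) (B 2 j)) = 0"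
          "(\<Sum>i\<in>R. \<Sum>j\<in>R-{i}. inner (B i j) (B i j)) = 0"
          using z(1) a b unfolding E_def by linarith+
      qed
      have c1: "B 1 j = 0 \<and> B 2 j = 0" if "j \<in> R" for j
      proof -
        have "inner (B 1 j) (B 1 j) + inner (B 2 j) (B 2 j) = 0"
          using E1 sum_nonneg_eq_0_iff[OF f, of "\<lambda>j. inner (B 1 j) (B 1 j) + inner (B 2 j) (B 2 j)"] that
          by (simp add: add_nonneg_nonneg)
        thus ?thesis by (metis add_nonneg_eq_0_iff inner_ge_zero inner_eq_zero_iff)
      qed
      have c2: "B i j = 0" if "i \<in> R" "j \<in> R" "i \<noteq> j" for i j
      proof -
        have "(\<Sum>j\<in>R-{i}. inner (B i j) (B i j)) = 0"
          using E2 sum_nonneg_eq_0_iff[OF f, of "\<lambda>i. \<Sum>j\<in>R-{i}. inner (B i j) (B i j)"] that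
          by (simp add: sum_nonneg)
        hence "inner (B i j) (B i j) = 0" using that f by (simp add: sum_nonneg_eq_0_iff)
        thus ?thesis by simp
      qed
      have cm: "c = m" using z(2) by simp
      have am: "B i i = m" if "i \<in> R" for i
      proof -
        have "inner (B i i - m) (B i i - m) = 0" using z(3) that f by (simp add: sum_nonneg_eq_0_iff)
        thus ?thesis by simp
      qed
      show "vcB B r" unfolding vcB_def using c1 c2 cm am by (simp add: R_def c_def)
    next
      assume v: "vcB B r"
      have c1: "B 1 j = 0 \<and> B 2 j = 0" if "j \<in> R" for j using v that by (simp add: vcB_def R_def)
      have c2: "B i j = 0" if "i \<in> R" "j \<in> R" "i \<noteq> j" for i j using v that by (simp add: vcB_def R_def)
      have c3: "B i i = c" if "i \<in> R" for i using v that by (simp add: vcB_def R_def c_def)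
      have "sR = real (r - 2) *\<^sub>R c" unfolding sR_def using c3 cardR by (simp add: sum_constant_scaleR)
      hence "\<sigma> = N *\<^sub>R c" using sig rN by (simp add: algebra_simps)
      hence mc: "m = c" using N by (simp add: m_def)
      have "E = 0" unfolding E_def using c1 c2 by simp
      thus "DB B r = 0" unfolding key using mc c3 by simp
    qed
  qed
qed

lemma bil_lin1: "bilinear B \<Longrightarrow> linear (\<lambda>x. B x y)" by (simp add: bilinear_def)
lemma bil_lin2: "bilinear B \<Longrightarrow> linear (\<lambda>y. B x y)" by (simp add: bilinear_def)

lemma bil_sum_left:
  assumes "bilinear B" shows "B (\<Sum>k\<in>S. a k *\<^sub>R u k) y = (\<Sum>k\<in>S. a k *\<^sub>R B (u k) y)"
proof -
  have l: "linear (\<lambda>x. B x y)" by (rule bil_lin1[OF assms])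
  have "B (\<Sum>k\<in>S. a k *\<^sub>R u k) y = (\<Sum>k\<in>S. B (a k *\<^sub>R u k) y)"
    using linear_sum[OF l, of "\<lambda>k. a k *\<^sub>R u k" S] by simp
  also have "\<dots> = (\<Sum>k\<in>S. a k *\<^sub>R B (u k) y)"
    using linear_scale[OF l] by simp
  finally show ?thesis .
qed

lemma bil_sum_right:
  assumes "bilinear B" shows "B y (\<Sum>k\<in>S. a k *\<^sub>R u k) = (\<Sum>k\<in>S. a k *\<^sub>R B y (u k))"
proof -
  have l: "linear (\<lambda>x. B y x)" by (rule bil_lin2[OF assms])
  have "B y (\<Sum>k\<in>S. a k *\<^sub>R u k) = (\<Sum>k\<in>S. B y (a k *\<^sub>R u k))"
    using linear_sum[OF l, of "\<lambda>k. a k *\<^sub>R u k" S] by simp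
  also have "\<dots> = (\<Sum>k\<in>S. a k *\<^sub>R B y (u k))"
    using linear_scale[OF l] by simp
  finally show ?thesis .
qed

lemma bilinear_inner_comp:
  assumes lf: "linear f" and lg: "linear g"
  shows "bilinear (\<lambda>u v. inner (f u) (g v))"
  unfolding bilinear_def
  by (auto intro!: linearI simp: linear_add[OF lf] linear_add[OF lg] linear_scale[OF lf] linear_scale[OF lg]
      inner_add_left inner_add_right)

lemma trace_inv:
  fixes B :: "'a::real_inner \<Rightarrow> 'a \<Rightarrow> 'b::real_vector"
  assumes oe: "onb V r e" and oW: "onb V r W" and bl: "bilinear B"
  shows "(\<Sum>i\<in>{1..r}. B (W i) (W i)) = (\<Sum>i\<in>{1..r}. B (e i) (e i))"
proof -
  have exp: "W i = (\<Sum>k\<in>{1..r}. inner (W i) (e k) *\<^sub>R e k)" if "i \<in> {1..r}" for i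
    using onb_expand[OF oe onb_in[OF oW that]] .
  have "(\<Sum>i\<in>{1..r}. B (W i) (W i))
      = (\<Sum>i\<in>{1..r}. \<Sum>k\<in>{1..r}. \<Sum>l\<in>{1..r}. (inner (W i) (e k) * inner (W i) (e l)) *\<^sub>R B (e k) (e l))"
  proof (rule sum.cong[OF refl])
    fix i assume i: "i \<in> {1..r}"
    have "B (W i) (W i) = B (\<Sum>k\<in>{1..r}. inner (W i) (e k) *\<^sub>R e k) (\<Sum>l\<in>{1..r}. inner (W i) (e l) *\<^sub>R e l)"
      using exp[OF i] by simp
    also have "\<dots> = (\<Sum>k\<in>{1..r}. \<Sum>l\<in>{1..r}. (inner (W i) (e k) * inner (W i) (e l)) *\<^sub>R B (e k) (e l))"
      apply (simp add: bil_sum_left[OF bl] bil_sum_right[OF bl] scaleR_sum_right)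
      apply (subst sum.swap)
      apply (simp add: mult.commute)
      done
    finally show "B (W i) (W i) = (\<Sum>k\<in>{1..r}. \<Sum>l\<in>{1..r}. (inner (W i) (e k) * inner (W i) (e l)) *\<^sub>R B (e k) (e l))" .
  qed
  also have "\<dots> = (\<Sum>k\<in>{1..r}. \<Sum>l\<in>{1..r}. (\<Sum>i\<in>{1..r}. inner (W i) (e k) * inner (W i) (e l)) *\<^sub>R B (e k) (e l))"
  proof -
    have "(\<Sum>i\<in>{1..r}. \<Sum>k\<in>{1..r}. \<Sum>l\<in>{1..r}. (inner (W i) (e k) * inner (W i) (e l)) *\<^sub>R B (e k) (e l))
      = (\<Sum>k\<in>{1..r}. \<Sum>i\<in>{1..r}. \<Sum>l\<in>{1..r}. (inner (W i) (e k) * inner (W i) (e l)) *\<^sub>R B (e k) (e l))"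
      by (rule sum.swap)
    also have "\<dots> = (\<Sum>k\<in>{1..r}. \<Sum>l\<in>{1..r}. \<Sum>i\<in>{1..r}. (inner (W i) (e k) * inner (W i) (e l)) *\<^sub>R B (e k) (e l))"
      by (rule sum.cong[OF refl], rule sum.swap)
    finally show ?thesis by (simp add: scaleR_sum_left)
  qed
  also have "\<dots> = (\<Sum>k\<in>{1..r}. \<Sum>l\<in>{1..r}. (if k = l then B (e k) (e l) else 0))"
  proof (intro sum.cong refl)
    fix k l assume k: "k \<in> {1..r}" and l: "l \<in> {1..r}"
    have "inner (e k) (e l) = (\<Sum>i\<in>{1..r}. inner (e k) (W i) * inner (W i) (e l))"
      by (rule onb_parseval[OF oW onb_in[OF oe k]])
    also have "\<dots> = (\<Sum>i\<in>{1..r}. inner (W i) (e k) * inner (W i) (e l))"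
      by (simp add: inner_commute[of "e k"])
    finally have "(\<Sum>i\<in>{1..r}. inner (W i) (e k) * inner (W i) (e l)) = inner (e k) (e l)" by simp
    also have "\<dots> = (if k = l then 1 else 0)" by (rule onb_inner[OF oe k l])
    finally have s: "(\<Sum>i\<in>{1..r}. inner (W i) (e k) * inner (W i) (e l)) = (if k = l then 1 else 0)" .
    show "(\<Sum>i\<in>{1..r}. inner (W i) (e k) * inner (W i) (e l)) *\<^sub>R B (e k) (e l) = (if k = l then B (e k) (e l) else 0)"
      unfolding s by simp
  qed
  also have "\<dots> = (\<Sum>i\<in>{1..r}. B (e i) (e i))"
    by simp
  finally show ?thesis .
qed

lemma bil_2:
  assumes bl: "bilinear T"
  shows "T (a *\<^sub>R x + b *\<^sub>R y) (c *\<^sub>R x + d *\<^sub>R y) = (a*c) *\<^sub>R T x x + (a*d) *\<^sub>R T x y + (b*c) *\<^sub>R T y x + (b*d) *\<^sub>R T y y"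
  by (simp add: bilinear_ladd[OF bl] bilinear_radd[OF bl] bilinear_lmul[OF bl] bilinear_rmul[OF bl] algebra_simps)

lemma quad_id:
  fixes A Bv C :: "'b::real_inner" and a b c d :: real
  shows "inner ((a*a) *\<^sub>R A + (a*b) *\<^sub>R C + (b*a) *\<^sub>R C + (b*b) *\<^sub>R Bv) ((c*c) *\<^sub>R A + (c*d) *\<^sub>R C + (d*c) *\<^sub>R C + (d*d) *\<^sub>R Bv)
    - inner ((a*c) *\<^sub>R A + (a*d) *\<^sub>R C + (b*c) *\<^sub>R C + (b*d) *\<^sub>R Bv) ((a*c) *\<^sub>R A + (a*d) *\<^sub>R C + (b*c) *\<^sub>R C + (b*d) *\<^sub>R Bv)
    = (a*d - b*c)^2 * (inner A Bv - inner C C)"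
proof -
  have c: "inner Bv A = inner A Bv" "inner C A = inner A C" "inner Bv C = inner C Bv"
    by (simp_all add: inner_commute)
  show ?thesis
    apply (simp add: inner_add_left inner_add_right c)
    apply (simp add: power2_eq_square algebra_simps)
    done
qed

lemma plane_inv:
  fixes T :: "'a::real_inner \<Rightarrow> 'a \<Rightarrow> 'b::real_inner"
  assumes oe: "onb V r e" and oW: "onb V r W" and r: "2 \<le> r"
    and sp: "span {W 1, W 2} = span {e 1, e 2}" and bl: "bilinear T"
    and sym: "\<And>x y. x \<in> V \<Longrightarrow> y \<in> V \<Longrightarrow> T x y = T y x"
  shows "inner (T (W 1) (W 1)) (T (W 2) (W 2)) - inner (T (W 1) (W 2)) (T (W 1) (W 2))
       = inner (T (e 1) (e 1)) (T (e 2) (e 2)) - inner (T (e 1) (e 2)) (T (e 1) (e 2))"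
proof -
  have i1: "1 \<in> {1..r}" and i2: "2 \<in> {1..r}" using r by auto
  have h12: "{1..2::nat} = {1,2}" by auto
  have op: "onb (span {e 1, e 2}) 2 e"
    unfolding onb_def h12
    using onb_inner[OF oe i1 i1] onb_inner[OF oe i1 i2] onb_inner[OF oe i2 i1] onb_inner[OF oe i2 i2]
    by (auto simp: span_base)
  have w1: "W 1 \<in> span {e 1, e 2}" and w2: "W 2 \<in> span {e 1, e 2}"
    using sp by (metis insertI1 insert_commute span_base)+
  define a where "a = inner (W 1) (e 1)"
  define b where "b = inner (W 1) (e 2)"
  define c where "c = inner (W 2) (e 1)"
  define d where "d = inner (W 2) (e 2)"
  have W1: "W 1 = a *\<^sub>R e 1 + b *\<^sub>R e 2"
    using onb_expand[OF op w1] unfolding h12 by (simp add: a_def b_def)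
  have W2: "W 2 = c *\<^sub>R e 1 + d *\<^sub>R e 2"
    using onb_expand[OF op w2] unfolding h12 by (simp add: c_def d_def)
  have p11: "inner (W 1) (W 1) = a*a + b*b"
    using onb_parseval[OF op w1, of "W 1"] unfolding h12 by (simp add: a_def b_def inner_commute)
  have p22: "inner (W 2) (W 2) = c*c + d*d"
    using onb_parseval[OF op w2, of "W 2"] unfolding h12 by (simp add: c_def d_def inner_commute)
  have p12: "inner (W 1) (W 2) = a*c + b*d"
    using onb_parseval[OF op w1, of "W 2"] unfolding h12 by (simp add: a_def b_def c_def d_def inner_commute)
  have "a*a + b*b = 1" "c*c + d*d = 1" "a*c + b*d = 0"
    using p11 p22 p12 onb_inner[OF oW i1 i1] onb_inner[OF oW i2 i2] onb_inner[OF oW i1 i2] by auto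
  moreover have "(a*d - b*c)^2 = (a*a + b*b) * (c*c + d*d) - (a*c + b*d)^2"
    by (simp add: power2_eq_square algebra_simps)
  ultimately have det: "(a*d - b*c)^2 = 1" by simp
  have e1V: "e 1 \<in> V" and e2V: "e 2 \<in> V" using onb_in[OF oe i1] onb_in[OF oe i2] .
  have s21: "T (e 2) (e 1) = T (e 1) (e 2)" using sym[OF e2V e1V] .
  show ?thesis
    unfolding W1 W2 bil_2[OF bl] s21
    using quad_id[where a=a and b=b and c=c and d=d and A="T (e 1) (e 1)" and C="T (e 1) (e 2)" and Bv="T (e 2) (e 2)"] det
    by (simp add: mult.commute)
qed

lemma DB_inv:
  fixes T :: "'a::real_inner \<Rightarrow> 'a \<Rightarrow> 'b::real_inner"
  assumes oe: "onb V r e" and oW: "onb V r W" and r: "2 \<le> r"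
    and sp: "span {W 1, W 2} = span {e 1, e 2}" and bl: "bilinear T"
    and sym: "\<And>x y. x \<in> V \<Longrightarrow> y \<in> V \<Longrightarrow> T x y = T y x"
  shows "DB (\<lambda>i j. T (W i) (W j)) r = DB (\<lambda>i j. T (e i) (e j)) r"
proof -
  have sg: "sigB (\<lambda>i j. T (W i) (W j)) r = sigB (\<lambda>i j. T (e i) (e j)) r"
    unfolding sigB_def by (rule trace_inv[OF oe oW bl])
  have bb: "BBs (\<lambda>i j. T (W i) (W j)) r = BBs (\<lambda>i j. T (e i) (e j)) r"
  proof -
    have "(\<Sum>i\<in>{1..r}. \<Sum>j\<in>{1..r}. inner (T (W i) (W j)) (T (W i) (W j)))
        = (\<Sum>i\<in>{1..r}. \<Sum>j\<in>{1..r}. inner (T (W i) (e j)) (T (W i) (e j)))"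
    proof (rule sum.cong[OF refl])
      fix i
      have "bilinear (\<lambda>u v. inner (T (W i) u) (T (W i) v))"
        by (rule bilinear_inner_comp[OF bil_lin2[OF bl] bil_lin2[OF bl]])
      then show "(\<Sum>j\<in>{1..r}. inner (T (W i) (W j)) (T (W i) (W j))) = (\<Sum>j\<in>{1..r}. inner (T (W i) (e j)) (T (W i) (e j)))"
        by (rule trace_inv[OF oe oW])
    qed
    also have "\<dots> = (\<Sum>j\<in>{1..r}. \<Sum>i\<in>{1..r}. inner (T (W i) (e j)) (T (W i) (e j)))"
      by (rule sum.swap)
    also have "\<dots> = (\<Sum>j\<in>{1..r}. \<Sum>i\<in>{1..r}. inner (T (e i) (e j)) (T (e i) (e j)))"
    proof (rule sum.cong[OF refl])
      fix j
      have "bilinear (\<lambda>u v. inner (T u (e j)) (T v (e j)))"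
        by (rule bilinear_inner_comp[OF bil_lin1[OF bl] bil_lin1[OF bl]])
      then show "(\<Sum>i\<in>{1..r}. inner (T (W i) (e j)) (T (W i) (e j))) = (\<Sum>i\<in>{1..r}. inner (T (e i) (e j)) (T (e i) (e j)))"
        by (rule trace_inv[OF oe oW])
    qed
    also have "\<dots> = (\<Sum>i\<in>{1..r}. \<Sum>j\<in>{1..r}. inner (T (e i) (e j)) (T (e i) (e j)))"
      by (rule sum.swap)
    finally show ?thesis unfolding BBs_def .
  qed
  show ?thesis unfolding DB_def sg bb using plane_inv[OF oe oW r sp bl sym] by simp
qed

lemma exists_onb_first:
  fixes S :: "'a::euclidean_space set"
  assumes sS: "subspace S" and dS: "dim S = s" and u: "u \<in> S" and nu: "norm u = 1"
  shows "\<exists>h. onb S s h \<and> h 1 = u"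
proof -
  define Z where "Z = {y \<in> S. \<forall>x \<in> span {u}. orthogonal x y}"
  have Zeq: "Z = {y \<in> S. inner u y = 0}"
    unfolding Z_def span_singleton orthogonal_def by auto
  have u0: "u \<noteq> 0" using nu by auto
  have "dim Z + dim (span {u}) = dim S" unfolding Z_def
    by (rule dim_subspace_orthogonal_to_vectors[OF subspace_span sS]) (use u sS in \<open>simp add: span_minimal\<close>)
  hence dZ: "dim Z + 1 = s" using u0 dS by simp
  have sZ: "subspace Z" unfolding Zeq using sS
    by (auto simp: subspace_def inner_add_right)
  obtain B where B: "B \<subseteq> Z" "pairwise orthogonal B" "\<And>x. x \<in> B \<Longrightarrow> norm x = 1"
    "independent B" "card B = dim Z" "span B = Z"
    using orthonormal_basis_subspace[OF sZ] by metis
  have fB: "finite B" using B(4) by (rule independent_imp_finite)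
  obtain f where f: "bij_betw f {0..<card B} B" using ex_bij_betw_nat_finite[OF fB] by blast
  define h where "h l = (if l = 1 then u else f (l - 2))" for l
  have cB: "card B = s - 1" using dZ B(5) by simp
  have s1: "s \<ge> 1" using dZ by simp
  have hB: "h l \<in> B" if "l \<in> {2..s}" for l
  proof -
    have "l - 2 \<in> {0..<card B}" using that cB s1 by auto
    thus ?thesis using f that by (auto simp: h_def bij_betw_def)
  qed
  have hS: "h l \<in> S" if "l \<in> {1..s}" for l
  proof (cases "l = 1")
    case True thus ?thesis using u by (simp add: h_def)
  next
    case False hence "l \<in> {2..s}" using that by auto
    thus ?thesis using hB B(1) Zeq by auto
  qed
  have orth: "inner (h i) (h j) = (if i = j then 1 else 0)" if i: "i \<in> {1..s}" and j: "j \<in> {1..s}" for i j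
  proof (cases "i = j")
    case True
    have "norm (h i) = 1"
    proof (cases "i = 1")
      case True thus ?thesis using nu by (simp add: h_def)
    next
      case False hence "i \<in> {2..s}" using i by auto
      thus ?thesis using hB B(3) by blast
    qed
    thus ?thesis using True by (simp add: norm_eq_1)
  next
    case False
    show ?thesis
    proof (cases "i = 1 \<or> j = 1")
      case True
      then show ?thesis
      proof
        assume i1: "i = 1"
        hence "j \<in> {2..s}" using j False by auto
        hence "h j \<in> Z" using hB B(1) by auto
        thus ?thesis using i1 False by (simp add: Zeq h_def)
      next
        assume j1: "j = 1"
        hence "i \<in> {2..s}" using i False by auto
        hence "h i \<in> Z" using hB B(1) by auto
        thus ?thesis using j1 False by (simp add: Zeq h_def inner_commute)
      qed
    next
      case nn: False
      hence i2: "i \<in> {2..s}" and j2: "j \<in> {2..s}" using i j by auto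
      have "i - 2 \<noteq> j - 2" using False i2 j2 by auto
      moreover have "i - 2 \<in> {0..<card B}" "j - 2 \<in> {0..<card B}" using i2 j2 cB by auto
      ultimately have "f (i - 2) \<noteq> f (j - 2)" using f by (auto simp: bij_betw_def inj_on_def)
      moreover have "h i = f (i - 2)" "h j = f (j - 2)" using nn by (auto simp: h_def)
      ultimately have "h i \<noteq> h j" by simp
      hence "orthogonal (h i) (h j)" using B(2) hB[OF i2] hB[OF j2] by (auto simp: pairwise_def)
      thus ?thesis using False by (simp add: orthogonal_def)
    qed
  qed
  have sp: "span (h ` {1..s}) = S"
  proof
    have "h ` {1..s} \<subseteq> S" using hS by blast
    thus "span (h ` {1..s}) \<subseteq> S" by (rule span_minimal[OF _ sS])
  next
    show "S \<subseteq> span (h ` {1..s})"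
    proof
      fix x assume x: "x \<in> S"
      have "x - inner u x *\<^sub>R u \<in> Z" unfolding Zeq using x u sS nu
        by (auto simp: subspace_diff subspace_scale inner_diff_right norm_eq_1)
      hence "x - inner u x *\<^sub>R u \<in> span B" using B(6) by simp
      moreover have "B \<subseteq> h ` {1..s}"
      proof
        fix y assume "y \<in> B"
        then obtain k where k: "k \<in> {0..<card B}" "y = f k" using f \<open>y \<in> B\<close> unfolding bij_betw_def by (metis imageE)
        hence "k + 2 \<in> {1..s}" "h (k + 2) = y" using cB by (auto simp: h_def)
        thus "y \<in> h ` {1..s}" by (metis imageI)
      qed
      ultimately have a: "x - inner u x *\<^sub>R u \<in> span (h ` {1..s})" using span_mono by blast
      have "u \<in> h ` {1..s}" using s1 by (auto simp: h_def image_iff intro!: bexI[of _ 1])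
      hence b: "inner u x *\<^sub>R u \<in> span (h ` {1..s})" by (simp add: span_base span_scale)
      have "x = (x - inner u x *\<^sub>R u) + inner u x *\<^sub>R u" by simp
      thus "x \<in> span (h ` {1..s})" using a b by (metis span_add)
    qed
  qed
  have "onb S s h" unfolding onb_def using hS orth sp by blast
  moreover have "h 1 = u" by (simp add: h_def)
  ultimately show ?thesis by blast
qed

lemma condE_iff:
  fixes T :: "'a::euclidean_space \<Rightarrow> 'a \<Rightarrow> 'a" and V :: "'a set"
  assumes sV: "subspace V" and r: "r > 2" and oe: "onb V r e"
    and ds: "dim (orth_comp V) = s" and bl: "bilinear T"
    and Tvert: "\<And>U W. U \<in> V \<Longrightarrow> W \<in> V \<Longrightarrow> T U W \<in> orth_comp V \<and> T U W = T W U"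
  shows "condE V T (meanH T r e) r s e \<longleftrightarrow> DB (\<lambda>i j. T (e i) (e j)) r = 0"
proof
  assume "condE V T (meanH T r e) r s e"
  then obtain W h where oW: "onb V r W" and sp: "span {W 1, W 2} = span {e 1, e 2}"
    and oh: "onb (orth_comp V) s h"
    and C1: "\<forall>l\<in>{1..s}. \<forall>j\<in>{3..r}. inner (T (W 1) (W j)) (h l) = 0 \<and> inner (T (W 2) (W j)) (h l) = 0"
    and C2: "1 \<le> s \<longrightarrow> (\<forall>i\<in>{3..r}. \<forall>j\<in>{3..r}. i \<noteq> j \<longrightarrow> inner (T (W i) (W j)) (h 1) = 0)"
    and C3: "\<forall>l\<in>{2..s}. \<forall>i\<in>{3..r}. \<forall>j\<in>{3..r}. inner (T (W i) (W j)) (h l) = 0"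
    and C4: "\<forall>l\<in>{2..s}. inner (T (W 1) (W 1)) (h l) + inner (T (W 2) (W 2)) (h l) = 0"
    and C5: "1 \<le> s \<longrightarrow> (\<forall>i\<in>{3..r}. inner (T (W 1) (W 1)) (h 1) + inner (T (W 2) (W 2)) (h 1) = inner (T (W i) (W i)) (h 1))"
    unfolding condE_def Let_def by blast
  have WV: "W i \<in> V" if "i \<in> {1..r}" for i using onb_in[OF oW that] .
  have inO: "T (W i) (W j) \<in> orth_comp V" if "i \<in> {1..r}" "j \<in> {1..r}" for i j
    using Tvert[OF WV[OF that(1)] WV[OF that(2)]] by blast
  have zero: "x = 0" if "x \<in> orth_comp V" "\<And>l. l \<in> {1..s} \<Longrightarrow> inner x (h l) = 0" for x
    using onb_orth_zero[OF oh that(1)] that(2) by blast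
  have l12: "l = 1 \<or> l \<in> {2..s}" if "l \<in> {1..s}" for l using that by auto
  have v: "vcB (\<lambda>i j. T (W i) (W j)) r"
    unfolding vcB_def
  proof (intro conjI ballI impI)
    fix j assume j: "j \<in> {3..r}"
    have jr: "j \<in> {1..r}" and i1: "1 \<in> {1..r}" and i2: "2 \<in> {1..r}" using j r by auto
    show "T (W 1) (W j) = 0" using zero[OF inO[OF i1 jr]] C1 j by blast
    show "T (W 2) (W j) = 0" using zero[OF inO[OF i2 jr]] C1 j by blast
  next
    fix i j assume i: "i \<in> {3..r}" and j: "j \<in> {3..r}" and ij: "i \<noteq> j"
    have ir: "i \<in> {1..r}" and jr: "j \<in> {1..r}" using i j by auto
    show "T (W i) (W j) = 0"
    proof (rule zero[OF inO[OF ir jr]])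
      fix l assume l: "l \<in> {1..s}"
      show "inner (T (W i) (W j)) (h l) = 0"
        using l12[OF l] C2 C3 i j ij l by auto
    qed
  next
    fix i assume i: "i \<in> {3..r}"
    have ir: "i \<in> {1..r}" and i1: "1 \<in> {1..r}" and i2: "2 \<in> {1..r}" using i r by auto
    have xin: "T (W 1) (W 1) + T (W 2) (W 2) - T (W i) (W i) \<in> orth_comp V"
      using inO[OF i1 i1] inO[OF i2 i2] inO[OF ir ir]
      by (metis subspace_orth_comp subspace_add subspace_diff)
    have "T (W 1) (W 1) + T (W 2) (W 2) - T (W i) (W i) = 0"
    proof (rule zero[OF xin])
      fix l assume l: "l \<in> {1..s}"
      show "inner (T (W 1) (W 1) + T (W 2) (W 2) - T (W i) (W i)) (h l) = 0"
        using l12[OF l] C4 C3 C5 i l by (auto simp: inner_add_left inner_diff_left)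
    qed
    thus "T (W 1) (W 1) + T (W 2) (W 2) = T (W i) (W i)" by (simp add: algebra_simps)
  qed
  have symW: "T (W i) (W j) = T (W j) (W i)" if "i \<in> {1..r}" "j \<in> {1..r}" for i j
    using Tvert[OF WV[OF that(1)] WV[OF that(2)]] by blast
  have "DB (\<lambda>i j. T (W i) (W j)) r = 0" using core[of r "\<lambda>i j. T (W i) (W j)"] r symW v by auto
  moreover have "DB (\<lambda>i j. T (W i) (W j)) r = DB (\<lambda>i j. T (e i) (e j)) r"
    by (rule DB_inv[OF oe oW _ sp bl]) (use r Tvert in auto)
  ultimately show "DB (\<lambda>i j. T (e i) (e j)) r = 0" by simp
next
  assume D0: "DB (\<lambda>i j. T (e i) (e j)) r = 0"
  have eV: "e i \<in> V" if "i \<in> {1..r}" for i using onb_in[OF oe that] .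
  have syme: "T (e i) (e j) = T (e j) (e i)" if "i \<in> {1..r}" "j \<in> {1..r}" for i j
    using Tvert[OF eV[OF that(1)] eV[OF that(2)]] by blast
  have v: "vcB (\<lambda>i j. T (e i) (e j)) r" using core[of r "\<lambda>i j. T (e i) (e j)"] r syme D0 by auto
  define c where "c = T (e 1) (e 1) + T (e 2) (e 2)"
  have i1: "1 \<in> {1..r}" and i2: "2 \<in> {1..r}" using r by auto
  have cO: "c \<in> orth_comp V" unfolding c_def
    using Tvert[OF eV[OF i1] eV[OF i1]] Tvert[OF eV[OF i2] eV[OF i2]]
    by (metis subspace_orth_comp subspace_add)
  have cR: "T (e i) (e i) = c" if "i \<in> {3..r}" for i using v that by (simp add: vcB_def c_def)
  have sig: "(\<Sum>i\<in>{1..r}. T (e i) (e i)) = (real r - 1) *\<^sub>R c"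
  proof -
    have "(\<Sum>i\<in>{1..r}. T (e i) (e i)) = c + (\<Sum>i\<in>{3..r}. T (e i) (e i))"
      using split12[of r "\<lambda>i. T (e i) (e i)"] r by (simp add: c_def)
    also have "(\<Sum>i\<in>{3..r}. T (e i) (e i)) = (\<Sum>i\<in>{3..r}. c)" using cR by simp
    also have "\<dots> = real (r - 2) *\<^sub>R c" by (simp add: sum_constant_scaleR)
    also have "real (r - 2) = real r - 2" using r by (simp add: of_nat_diff)
    also have "c + (real r - 2) *\<^sub>R c = (1 + (real r - 2)) *\<^sub>R c" by (simp only: scaleR_add_left scaleR_one)
    also have "1 + (real r - 2) = real r - 1" by simp
    finally show ?thesis .
  qed
  define Hm where "Hm = meanH T r e"
  have Hm: "Hm = ((real r - 1) / real r) *\<^sub>R c" unfolding Hm_def meanH_def sig by simp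
  have rpos: "(real r - 1) / real r \<noteq> 0" using r by auto
  have sO: "subspace (orth_comp V)" by (rule subspace_orth_comp)
  obtain h where oh: "onb (orth_comp V) s h" and h1: "Hm \<noteq> 0 \<longrightarrow> h 1 = (1 / norm Hm) *\<^sub>R Hm"
  proof (cases "Hm = 0")
    case False
    have "Hm \<in> orth_comp V" unfolding Hm using cO sO by (simp add: subspace_scale)
    hence "(1 / norm Hm) *\<^sub>R Hm \<in> orth_comp V" using sO by (simp add: subspace_scale)
    moreover have "norm ((1 / norm Hm) *\<^sub>R Hm) = 1" using False by simp
    ultimately obtain h where "onb (orth_comp V) s h" "h 1 = (1 / norm Hm) *\<^sub>R Hm"
      using exists_onb_first[OF sO ds] by blast
    thus ?thesis using that by blast
  next
    case True
    show ?thesis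
    proof (cases "s = 0")
      case True
      have "orth_comp V \<subseteq> {0}" using ds True by simp
      hence "orth_comp V = {0}" using sO subspace_0 by blast
      hence "onb (orth_comp V) s (\<lambda>_. 0)" using True by (simp add: onb_def)
      thus ?thesis using that \<open>Hm = 0\<close> by blast
    next
      case False
      obtain B where B: "B \<subseteq> orth_comp V" "\<And>x. x \<in> B \<Longrightarrow> norm x = 1" "card B = dim (orth_comp V)"
        using orthonormal_basis_subspace[OF sO] by metis
      have "B \<noteq> {}" using B(3) ds False by auto
      then obtain u where "u \<in> B" by blast
      hence "u \<in> orth_comp V" "norm u = 1" using B by auto
      then obtain h where "onb (orth_comp V) s h" using exists_onb_first[OF sO ds] by blast
      thus ?thesis using that \<open>Hm = 0\<close> by blast
    qed
  qed
  have hc: "inner c (h l) = 0" if l: "l \<in> {2..s}" for l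
  proof (cases "Hm = 0")
    case True
    hence "c = 0" using Hm rpos by simp
    thus ?thesis by simp
  next
    case False
    have "inner (h 1) (h l) = 0" using onb_inner[OF oh, of 1 l] l by auto
    hence "inner Hm (h l) = 0" using h1 False by simp
    thus ?thesis using Hm rpos by simp
  qed
  have eb: "onb V r e" by (rule oe)
  show "condE V T (meanH T r e) r s e"
    unfolding condE_def Let_def Hm_def[symmetric]
  proof (intro exI conjI)
    show "onb V r e" by (rule oe)
    show "span {e 1, e 2} = span {e 1, e 2}" ..
    show "onb (orth_comp V) s h" by (rule oh)
    show "Hm \<noteq> 0 \<longrightarrow> h 1 = (1 / norm Hm) *\<^sub>R Hm" by (rule h1)
    show "\<forall>l\<in>{1..s}. \<forall>j\<in>{3..r}. inner (T (e 1) (e j)) (h l) = 0 \<and> inner (T (e 2) (e j)) (h l) = 0"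
      using v by (simp add: vcB_def)
    show "1 \<le> s \<longrightarrow> (\<forall>i\<in>{3..r}. \<forall>j\<in>{3..r}. i \<noteq> j \<longrightarrow> inner (T (e i) (e j)) (h 1) = 0)"
      using v by (simp add: vcB_def)
    show "\<forall>l\<in>{2..s}. \<forall>i\<in>{3..r}. \<forall>j\<in>{3..r}. inner (T (e i) (e j)) (h l) = 0"
    proof (intro ballI)
      fix l i j assume l: "l \<in> {2..s}" and i: "i \<in> {3..r}" and j: "j \<in> {3..r}"
      show "inner (T (e i) (e j)) (h l) = 0"
      proof (cases "i = j")
        case True thus ?thesis using cR[OF i] hc[OF l] by simp
      next
        case False thus ?thesis using v i j by (simp add: vcB_def)
      qed
    qed
    show "\<forall>l\<in>{2..s}. inner (T (e 1) (e 1)) (h l) + inner (T (e 2) (e 2)) (h l) = 0"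
      using hc by (simp add: c_def inner_add_left)
    show "1 \<le> s \<longrightarrow> (\<forall>i\<in>{3..r}. inner (T (e 1) (e 1)) (h 1) + inner (T (e 2) (e 2)) (h 1) = inner (T (e i) (e i)) (h 1))"
      using cR by (simp add: c_def inner_add_left)
  qed
qed

lemma arith_final1:
  fixes R c1 c2 c3 Qn S q12 X BB a12 b12 t1 t2 :: real
  assumes R: "R > 2" and S: "S = 1"
  shows "1/2 * ((c1 * (R*R - R) + 3*c2*Qn - c3*(2*R*S - 2*S)) - X + BB)
        - (c1 + 3*c2*q12 - c3*(t1 + t2) - a12 + b12)
     = (- (R^2 * (R - 2)) / (2 * (R - 1)) * (X / R^2)
        + c1 / 2 * (R^2 - R - 2) - c3 * ((R - 1) - (t1 + t2)) + 3/2 * c2 * (Qn - 2 * q12))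
       + (1/2 * BB - 1/2 * X + (a12 - b12) + (R - 2) / (2 * (R - 1)) * X)"
proof -
  have "R - 1 \<noteq> 0" "R \<noteq> 0" using R by auto
  hence h: "- (R^2 * (R - 2)) / (2 * (R - 1)) * (X / R^2) = - ((R - 2) / (2 * (R - 1)) * X)"
    by (simp add: power2_eq_square field_simps)
  show ?thesis unfolding h using S by (simp add: algebra_simps power2_eq_square) (simp add: field_simps)
qed

lemma arith_final2:
  fixes R c1 c2 c3 Qn S q12 X BB a12 b12 t1 t2 :: real
  assumes R: "R > 2" and S: "S = 0" and t: "t1 = 0" "t2 = 0"
  shows "1/2 * ((c1 * (R*R - R) + 3*c2*Qn - c3*(2*R*S - 2*S)) - X + BB)
        - (c1 + 3*c2*q12 - c3*(t1 + t2) - a12 + b12)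
     = (- (R^2 * (R - 2)) / (2 * (R - 1)) * (X / R^2)
        + c1 / 2 * (R^2 - R - 2) + 3/2 * c2 * (Qn - 2 * q12))
       + (1/2 * BB - 1/2 * X + (a12 - b12) + (R - 2) / (2 * (R - 1)) * X)"
proof -
  have "R - 1 \<noteq> 0" "R \<noteq> 0" using R by auto
  hence h: "- (R^2 * (R - 2)) / (2 * (R - 1)) * (X / R^2) = - ((R - 2) / (2 * (R - 1)) * X)"
    by (simp add: power2_eq_square field_simps)
  show ?thesis unfolding h using S t by (simp add: algebra_simps power2_eq_square) (simp add: field_simps)
qed

theorem mainTheorem5:
  fixes \<phi> :: "'a::euclidean_space \<Rightarrow> 'a" and \<xi> :: 'a and \<eta> :: "'a \<Rightarrow> real"
    and c1 c2 c3 :: real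
    and V :: "'a set"
    and T :: "'a \<Rightarrow> 'a \<Rightarrow> 'a"
    and Rk :: "'a \<Rightarrow> 'a \<Rightarrow> 'a \<Rightarrow> 'a \<Rightarrow> real"
    and n m k r s :: nat
    and e h :: "nat \<Rightarrow> 'a"
  assumes dimn: "DIM('a) = n" "n = 2 * k + 1"
    and acm: "almost_contact_metric \<phi> \<xi> \<eta>"
    and Vsub: "subspace V" "dim V = r" "r = n - m" "s = m" "r > 2"
    and Tbil: "bilinear T"
    and Tvert: "\<And>U W. U \<in> V \<Longrightarrow> W \<in> V \<Longrightarrow> T U W \<in> orth_comp V \<and> T U W = T W U"
    and Gauss: "\<And>F1 F2 F3 F4. F1 \<in> V \<Longrightarrow> F2 \<in> V \<Longrightarrow> F3 \<in> V \<Longrightarrow> F4 \<in> V \<Longrightarrow>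
        inner (gss_curv c1 c2 c3 \<phi> \<xi> \<eta> F1 F2 F3) F4
          = Rk F1 F2 F3 F4 + inner (T F1 F4) (T F2 F3) - inner (T F2 F4) (T F1 F3)"
    and ebasis: "onb V r e"
    and hbasis: "onb (orth_comp V) s h"
  shows "(\<xi> \<in> V \<longrightarrow>
            (let lhs = tauV Rk r e - Rk (e 1) (e 2) (e 2) (e 1);
                 rhs = - (real r ^ 2 * (real r - 2)) / (2 * (real r - 1)) * (norm (meanH T r e))\<^sup>2
                       + c1 / 2 * (real r ^ 2 - real r - 2)
                       - c3 * ((real r - 1) - ((\<eta> (e 1))\<^sup>2 + (\<eta> (e 2))\<^sup>2))
                       + 3 / 2 * c2 * (Qnorm2 V \<phi> r e - 2 * (inner (e 1) (vproj V (\<phi> (e 2))))\<^sup>2)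
             in lhs \<ge> rhs \<and> (lhs = rhs \<longleftrightarrow> condE V T (meanH T r e) r s e)))
       \<and> (\<xi> \<in> orth_comp V \<longrightarrow>
            (let lhs = tauV Rk r e - Rk (e 1) (e 2) (e 2) (e 1);
                 rhs = - (real r ^ 2 * (real r - 2)) / (2 * (real r - 1)) * (norm (meanH T r e))\<^sup>2
                       + c1 / 2 * (real r ^ 2 - real r - 2)
                       + 3 / 2 * c2 * (Qnorm2 V \<phi> r e - 2 * (inner (e 1) (vproj V (\<phi> (e 2))))\<^sup>2)
             in lhs \<ge> rhs \<and> (lhs = rhs \<longleftrightarrow> condE V T (meanH T r e) r s e)))"
proof -
  note af = acm_facts[OF acm]
  have eta: "\<And>x. \<eta> x = inner x \<xi>" by (rule af(2))
  have skw: "\<And>x y. inner (\<phi> x) y = - inner x (\<phi> y)" by (rule af(3))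
  have sz: "\<And>x. inner x (\<phi> x) = 0" by (rule af(4))
  have xx: "inner \<xi> \<xi> = 1" by (rule af(5))
  have r2: "r > 2" using Vsub by simp
  have sV: "subspace V" using Vsub by simp
  have eV: "e i \<in> V" if "i \<in> {1..r}" for i using onb_in[OF ebasis that] .
  have ds: "dim (orth_comp V) = s"
  proof -
    have "dim {y \<in> UNIV. \<forall>x\<in>V. orthogonal x y} + dim V = dim (UNIV::'a set)"
      by (rule dim_subspace_orthogonal_to_vectors[OF sV subspace_UNIV]) simp
    moreover have "{y \<in> UNIV. \<forall>x\<in>V. orthogonal x y} = orth_comp V"
      by (auto simp: orth_comp_def orthogonal_def inner_commute)
    ultimately have "dim (orth_comp V) + r = n" using dimn Vsub by simp
    thus ?thesis using Vsub by linarith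
  qed
  define A where "A = (\<lambda>i j. T (e i) (e j))"
  define X where "X = inner (sigB A r) (sigB A r)"
  define Qn where "Qn = (\<Sum>i\<in>{1..r}. \<Sum>j\<in>{1..r}. (inner (e i) (\<phi> (e j)))\<^sup>2)"
  define S where "S = (\<Sum>i\<in>{1..r}. (\<eta> (e i))\<^sup>2)"
  define q12 where "q12 = (inner (e 1) (\<phi> (e 2)))\<^sup>2"
  define G where "G i j = inner (gss_curv c1 c2 c3 \<phi> \<xi> \<eta> (e i) (e j) (e j)) (e i)" for i j
  have Gf: "G i j = c1 + 3*c2*(inner (e i) (\<phi> (e j)))\<^sup>2 - c3 * ((\<eta> (e i))\<^sup>2 + (\<eta> (e j))\<^sup>2)
      - (if i = j then c1 - 2 * c3 * (\<eta> (e i))\<^sup>2 else 0)" if i: "i \<in> {1..r}" and j: "j \<in> {1..r}" for i j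
  proof (cases "i = j")
    case True
    show ?thesis unfolding G_def gss_formula[OF sz eta] using onb_inner[OF ebasis i i] True
      by (simp add: power2_eq_square algebra_simps)
  next
    case False
    show ?thesis unfolding G_def gss_formula[OF sz eta] using onb_inner[OF ebasis i i] onb_inner[OF ebasis j j]
      onb_inner[OF ebasis i j] False
      by (simp add: power2_eq_square algebra_simps)
  qed
  have Gsum: "(\<Sum>i\<in>{1..r}. \<Sum>j\<in>{1..r}. G i j) = c1 * (real r * real r - real r) + 3*c2*Qn - c3*(2*real r*S - 2*S)"
  proof -
    have inner_s: "(\<Sum>j\<in>{1..r}. G i j) = real r * c1 + 3*c2*(\<Sum>j\<in>{1..r}. (inner (e i) (\<phi> (e j)))\<^sup>2)
        - c3 * (real r * (\<eta> (e i))\<^sup>2 + S) - (c1 - 2 * c3 * (\<eta> (e i))\<^sup>2)" if i: "i \<in> {1..r}" for i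
    proof -
      have "(\<Sum>j\<in>{1..r}. G i j) = (\<Sum>j\<in>{1..r}. c1 + 3*c2*(inner (e i) (\<phi> (e j)))\<^sup>2 - c3 * ((\<eta> (e i))\<^sup>2 + (\<eta> (e j))\<^sup>2)
      - (if i = j then c1 - 2 * c3 * (\<eta> (e i))\<^sup>2 else 0))"
        using Gf[OF i] by (intro sum.cong refl) simp
      also have "\<dots> = real r * c1 + 3*c2*(\<Sum>j\<in>{1..r}. (inner (e i) (\<phi> (e j)))\<^sup>2)
        - c3 * (real r * (\<eta> (e i))\<^sup>2 + S) - (c1 - 2 * c3 * (\<eta> (e i))\<^sup>2)"
        using i by (simp add: sum.distrib sum_subtractf sum_distrib_left[symmetric] S_def)
      finally show ?thesis .
    qed
    have "(\<Sum>i\<in>{1..r}. \<Sum>j\<in>{1..r}. G i j) = (\<Sum>i\<in>{1..r}. real r * c1 + 3*c2*(\<Sum>j\<in>{1..r}. (inner (e i) (\<phi> (e j)))\<^sup>2)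
        - c3 * (real r * (\<eta> (e i))\<^sup>2 + S) - (c1 - 2 * c3 * (\<eta> (e i))\<^sup>2))"
      using inner_s by (intro sum.cong refl) simp
    also have "\<dots> = c1 * (real r * real r - real r) + 3*c2*Qn - c3*(2*real r*S - 2*S)"
      by (simp add: sum.distrib sum_subtractf sum_distrib_left[symmetric] S_def Qn_def algebra_simps)
    finally show ?thesis .
  qed
  have Rk_eq: "Rk (e i) (e j) (e j) (e i) = G i j - inner (A i i) (A j j) + inner (A i j) (A i j)"
    if i: "i \<in> {1..r}" and j: "j \<in> {1..r}" for i j
  proof -
    have "T (e j) (e i) = T (e i) (e j)" using Tvert[OF eV[OF j] eV[OF i]] by blast
    thus ?thesis using Gauss[OF eV[OF i] eV[OF j] eV[OF j] eV[OF i]] by (simp add: G_def A_def)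
  qed
  have XX: "(\<Sum>i\<in>{1..r}. \<Sum>j\<in>{1..r}. inner (A i i) (A j j)) = X"
    unfolding X_def sigB_def inner_sum_left by (simp only: inner_sum_right)
  have tau: "tauV Rk r e = 1/2 * ((c1 * (real r * real r - real r) + 3*c2*Qn - c3*(2*real r*S - 2*S)) - X + BBs A r)"
  proof -
    have "tauV Rk r e = 1/2 * (\<Sum>i\<in>{1..r}. \<Sum>j\<in>{1..r}. G i j - inner (A i i) (A j j) + inner (A i j) (A i j))"
      unfolding tauV_def using Rk_eq by (intro arg_cong[where f="\<lambda>x. 1/2 * x"] sum.cong refl) auto
    also have "\<dots> = 1/2 * ((\<Sum>i\<in>{1..r}. \<Sum>j\<in>{1..r}. G i j) - (\<Sum>i\<in>{1..r}. \<Sum>j\<in>{1..r}. inner (A i i) (A j j)) + BBs A r)"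
      by (simp add: sum.distrib sum_subtractf BBs_def)
    finally show ?thesis unfolding Gsum XX .
  qed
  have i1: "1 \<in> {1..r}" and i2: "2 \<in> {1..r}" using r2 by auto
  have K: "Rk (e 1) (e 2) (e 2) (e 1) = c1 + 3*c2*q12 - c3*((\<eta> (e 1))\<^sup>2 + (\<eta> (e 2))\<^sup>2)
      - inner (A 1 1) (A 2 2) + inner (A 1 2) (A 1 2)"
    using Rk_eq[OF i1 i2] Gf[OF i1 i2] by (simp add: q12_def)
  have Qeq: "Qnorm2 V \<phi> r e = Qn"
    unfolding Qnorm2_def Qn_def
  proof (intro sum.cong refl)
    fix i j assume i: "i \<in> {1..r}" and j: "j \<in> {1..r}"
    show "(inner (vproj V (\<phi> (e i))) (e j))\<^sup>2 = (inner (e i) (\<phi> (e j)))\<^sup>2"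
      using vproj_inner[OF ebasis eV[OF j]] skw[of "e i" "e j"] by simp
  qed
  have q12eq: "(inner (e 1) (vproj V (\<phi> (e 2))))\<^sup>2 = q12"
    using vproj_inner[OF ebasis eV[OF i1], of "\<phi> (e 2)"] by (simp add: q12_def inner_commute)
  have Hn: "(norm (meanH T r e))\<^sup>2 = X / (real r)^2"
  proof -
    have "(norm (meanH T r e))\<^sup>2 = inner (meanH T r e) (meanH T r e)" by (rule power2_norm_eq_inner)
    also have "\<dots> = X / (real r)\<^sup>2" by (simp add: meanH_def X_def sigB_def A_def power2_eq_square)
    finally show ?thesis .
  qed
  have Rgt: "real r > 2" using r2 by simp
  have core_e: "DB A r \<ge> 0 \<and> (DB A r = 0 \<longleftrightarrow> vcB A r)"
    by (rule core[OF r2]) (use Tvert eV in \<open>auto simp: A_def\<close>)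
  have cE: "condE V T (meanH T r e) r s e \<longleftrightarrow> DB A r = 0"
    unfolding A_def by (rule condE_iff[OF sV r2 ebasis ds Tbil Tvert])
  have DBdef: "DB A r = 1/2 * BBs A r - 1/2 * X + (inner (A 1 1) (A 2 2) - inner (A 1 2) (A 1 2))
     + (real r - 2) / (2 * (real r - 1)) * X" by (simp add: DB_def X_def)
  show ?thesis
  proof (intro conjI impI)
    assume xV: "\<xi> \<in> V"
    have S1: "S = 1"
    proof -
      have "S = (\<Sum>i\<in>{1..r}. inner \<xi> (e i) * inner (e i) \<xi>)"
        unfolding S_def eta by (simp add: power2_eq_square inner_commute)
      also have "\<dots> = inner \<xi> \<xi>" by (rule onb_parseval[OF ebasis xV, symmetric])
      finally show ?thesis using xx by simp
    qed
    have eq: "tauV Rk r e - Rk (e 1) (e 2) (e 2) (e 1) =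
       (- (real r ^ 2 * (real r - 2)) / (2 * (real r - 1)) * (norm (meanH T r e))\<^sup>2
                       + c1 / 2 * (real r ^ 2 - real r - 2)
                       - c3 * ((real r - 1) - ((\<eta> (e 1))\<^sup>2 + (\<eta> (e 2))\<^sup>2))
                       + 3 / 2 * c2 * (Qnorm2 V \<phi> r e - 2 * (inner (e 1) (vproj V (\<phi> (e 2))))\<^sup>2)) + DB A r"
      unfolding tau K Hn Qeq q12eq DBdef
      by (rule arith_final1[OF Rgt S1])
    show "let lhs = tauV Rk r e - Rk (e 1) (e 2) (e 2) (e 1);
                 rhs = - (real r ^ 2 * (real r - 2)) / (2 * (real r - 1)) * (norm (meanH T r e))\<^sup>2
                       + c1 / 2 * (real r ^ 2 - real r - 2)
                       - c3 * ((real r - 1) - ((\<eta> (e 1))\<^sup>2 + (\<eta> (e 2))\<^sup>2))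
                       + 3 / 2 * c2 * (Qnorm2 V \<phi> r e - 2 * (inner (e 1) (vproj V (\<phi> (e 2))))\<^sup>2)
             in lhs \<ge> rhs \<and> (lhs = rhs \<longleftrightarrow> condE V T (meanH T r e) r s e)"
      unfolding Let_def eq cE using core_e by auto
  next
    assume xO: "\<xi> \<in> orth_comp V"
    have e0: "\<eta> (e i) = 0" if "i \<in> {1..r}" for i
    proof -
      have "inner \<xi> (e i) = 0" using xO eV[OF that] by (auto simp: orth_comp_def)
      thus ?thesis by (simp add: eta inner_commute[of "e i" \<xi>])
    qed
    have S0: "S = 0" unfolding S_def using e0 by simp
    have t0: "(\<eta> (e 1))\<^sup>2 = 0" "(\<eta> (e 2))\<^sup>2 = 0" using e0[OF i1] e0[OF i2] by simp_all
    have eq: "tauV Rk r e - Rk (e 1) (e 2) (e 2) (e 1) =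
       (- (real r ^ 2 * (real r - 2)) / (2 * (real r - 1)) * (norm (meanH T r e))\<^sup>2
                       + c1 / 2 * (real r ^ 2 - real r - 2)
                       + 3 / 2 * c2 * (Qnorm2 V \<phi> r e - 2 * (inner (e 1) (vproj V (\<phi> (e 2))))\<^sup>2)) + DB A r"
      unfolding tau K Hn Qeq q12eq DBdef
      by (rule arith_final2[OF Rgt S0 t0])
    show "let lhs = tauV Rk r e - Rk (e 1) (e 2) (e 2) (e 1);
                 rhs = - (real r ^ 2 * (real r - 2)) / (2 * (real r - 1)) * (norm (meanH T r e))\<^sup>2
                       + c1 / 2 * (real r ^ 2 - real r - 2)
                       + 3 / 2 * c2 * (Qnorm2 V \<phi> r e - 2 * (inner (e 1) (vproj V (\<phi> (e 2))))\<^sup>2)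
             in lhs \<ge> rhs \<and> (lhs = rhs \<longleftrightarrow> condE V T (meanH T r e) r s e)"
      unfolding Let_def eq cE using core_e by auto
  qed
qed

end
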